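(* Let $g\ge0$, $n\ge1$ be integers and $\mathcal{A}\in\mathcal{D}_{g,n}$ a weight datum. Let $\mathcal{A}_1,\dots,\mathcal{A}_{N-1},\mathcal{A}_N=\mathcal{A}$ be weight data lying in chambers $Ch_{\mathcal{A}_p}\ni\mathcal{A}_p$ such that $$[Ch_{\mathcal{A}_1}]\leq [Ch_{\mathcal{A}_2}]\leq \dots\leq [Ch_{\mathcal{A}_{N-1}}]\leq [Ch_{\mathcal{A}}].$$ Then this sequence induces a filtration of chain complexes $$G^{(g,\mathcal{A}_1)}\hookrightarrow G^{(g,\mathcal{A}_2)}\hookrightarrow \dots\hookrightarrow G^{(g,\mathcal{A}_{N-1})}\hookrightarrow G^{(g,\mathcal{A})},$$ where each $G^{(g,\mathcal{A}_{p-1})}\hookrightarrow G^{(g,\mathcal{A}_p)}$, $p=2,\dots,N$, is an injective map of chain complexes.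
   Context: A weight datum is $\mathcal{A}=(a_1,\dots,a_n)$ with $a_i\in\mathbb{Q}\cap(0,1]$ and $2g-2+\sum_i a_i>0$; $\mathcal{D}_{g,n}\subset\mathbb{R}^n$ is the set of weight data. For $S\subseteq\{1,\dots,n\}$ with $2\le|S|\le n$ if $g\ge1$ (resp. $2\le|S|\le n-2$ if $g=0$), the wall $w_S$ is the locus $\sum_{i\in S}a_i=1$. Chambers are the connected components of the complement in $\mathcal{D}_{g,n}$ of all walls; each is determined by the direction ($<1$ or $>1$) of $\sum_{i\in S}a_i$ for each such $S$. Chambers are partially ordered by $Ch_1\le Ch_2$ iff for every such $S$, $\sum_{i\in S}a_i>1$ on $Ch_1$ implies $\sum_{i\in S}b_i>1$ on $Ch_2$. $S_n$ acts by permuting coordinates; $[Ch]$ is the $S_n$-orbit of a chamber, and $[Ch_1]\le[Ch_2]$ iff there are $Ch_1'\in[Ch_1]$, $Ch_2'\in[Ch_2]$ with $Ch_1'\le Ch_2'$. A $(g,\mathcal{A})$-stable graph is a finite connected graph $G$ (loops and multiple edges allowed) with vertex weight $w:V(G)\to\mathbb{Z}_{\ge0}$ and $n$ legs labelled $1,\dots,n$ attached via $m:\{1,\dots,n\}\to V(G)$, with $b_1(G)+\sum_v w(v)=g$ and $2w(v)-2+|v|_E+|v|_{\mathcal{A}}>0$ for every vertex $v$, where $|v|_E$ is the number of edge half-edges at $v$ (loops counted twice) and $|v|_{\mathcal{A}}=\sum_{m(i)=v}a_i$. The graph complex $G^{(g,\mathcal{A})}$ is the chain complex of rational vector spaces generated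 by pairs $[\mathbf{G},\omega]$, with $\mathbf{G}$ a $(g,\mathcal{A})$-stable graph and $\omega$ a total order of its edges, subject to $[\mathbf{G},\omega]=\mathrm{sgn}(\sigma)[\mathbf{G}',\omega']$ whenever there is an isomorphism of $n$-marked weighted graphs $\mathbf{G}\cong\mathbf{G}'$ under which $\omega,\omega'$ differ by $\sigma\in S_{|E(\mathbf{G})|}$; it is graded by the number of edges, with differential the signed sum of the contractions of the non-loop edges. *)

theory Defs
  imports Complex_Main "HOL-Combinatorics.Permutations"
begin

text \<open>A weight datum for n legs is a list A of rationals of length n; leg i+1 of the
paper corresponds to list index i.\<close>

definition weight_datum :: "nat \<Rightarrow> rat list \<Rightarrow> bool" where
  "weight_datum g A \<longleftrightarrow>
     (\<forall>i<length A. 0 < A ! i \<and> A ! i \<le> 1) \<and> 2 * of_nat g - 2 + sum_list A > 0"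

definition wall_set :: "nat \<Rightarrow> nat \<Rightarrow> nat set \<Rightarrow> bool" where
  "wall_set g n S \<longleftrightarrow> S \<subseteq> {..<n} \<and> 2 \<le> card S \<and> (g = 0 \<longrightarrow> card S + 2 \<le> n)"

definition wsum :: "rat list \<Rightarrow> nat set \<Rightarrow> rat" where
  "wsum A S = (\<Sum>i\<in>S. A ! i)"

definition in_chamber :: "nat \<Rightarrow> rat list \<Rightarrow> bool" where
  "in_chamber g A \<longleftrightarrow> weight_datum g A \<and>
     (\<forall>S. wall_set g (length A) S \<longrightarrow> wsum A S \<noteq> 1)"

text \<open>Ch_A \<le> Ch_B (chambers containing A, B), evaluated at the points.\<close>
definition chamber_le :: "nat \<Rightarrow> rat list \<Rightarrow> rat list \<Rightarrow> bool" where
  "chamber_le g A B \<longleftrightarrow>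
     (\<forall>S. wall_set g (length A) S \<longrightarrow> wsum A S > 1 \<longrightarrow> wsum B S > 1)"

text \<open>[Ch_A] \<le> [Ch_B]: some S_n-translates are comparable.\<close>
definition orbit_le :: "nat \<Rightarrow> rat list \<Rightarrow> rat list \<Rightarrow> bool" where
  "orbit_le g A B \<longleftrightarrow>
     (\<exists>\<sigma>1 \<sigma>2. \<sigma>1 permutes {..<length A} \<and> \<sigma>2 permutes {..<length B} \<and>
        chamber_le g (permute_list \<sigma>1 A) (permute_list \<sigma>2 B))"

text \<open>Vertices are 0..<length wt (with genus weights wt); edges are the list edg
(unordered pairs of endpoints; the list order is the edge order \<omega>); leg i is attached
at vertex leg ! i.\<close>
record sgraph =
  wt  :: "nat list"
  edg :: "(nat \<times> nat) list"
  leg :: "nat list"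

definition nverts :: "sgraph \<Rightarrow> nat" where "nverts G = length (wt G)"
definition nedges :: "sgraph \<Rightarrow> nat" where "nedges G = length (edg G)"

definition adjacent :: "sgraph \<Rightarrow> nat \<Rightarrow> nat \<Rightarrow> bool" where
  "adjacent G u v \<longleftrightarrow> (\<exists>j<nedges G. edg G ! j = (u, v) \<or> edg G ! j = (v, u))"

definition connected_sg :: "sgraph \<Rightarrow> bool" where
  "connected_sg G \<longleftrightarrow> (\<forall>u<nverts G. \<forall>v<nverts G. (adjacent G)\<^sup>*\<^sup>* u v)"

definition betti1 :: "sgraph \<Rightarrow> nat" where
  "betti1 G = nedges G + 1 - nverts G"

text \<open>Number of edge half-edges at v (loops counted twice).\<close>
definition edge_valence :: "sgraph \<Rightarrow> nat \<Rightarrow> nat" where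
  "edge_valence G v = (\<Sum>j<nedges G.
      (if fst (edg G ! j) = v then 1 else 0) + (if snd (edg G ! j) = v then 1 else 0))"

definition leg_weight :: "rat list \<Rightarrow> sgraph \<Rightarrow> nat \<Rightarrow> rat" where
  "leg_weight A G v = (\<Sum>i<length A. if leg G ! i = v then A ! i else 0)"

definition stable_graph :: "nat \<Rightarrow> rat list \<Rightarrow> sgraph \<Rightarrow> bool" where
  "stable_graph g A G \<longleftrightarrow>
     1 \<le> nverts G \<and> length (leg G) = length A \<and>
     (\<forall>i<length A. leg G ! i < nverts G) \<and>
     (\<forall>j<nedges G. fst (edg G ! j) < nverts G \<and> snd (edg G ! j) < nverts G) \<and>
     connected_sg G \<and> betti1 G + sum_list (wt G) = g \<and>
     (\<forall>v<nverts G. 2 * of_nat (wt G ! v) - 2 + of_nat (edge_valence G v)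
                     + leg_weight A G v > (0::rat))"

text \<open>Isomorphism of n-marked weighted graphs G \<cong> H whose edge bijection,
read through the edge orders, is the permutation \<sigma> (edge j of G goes to edge \<sigma> j of H).\<close>
definition sg_iso :: "sgraph \<Rightarrow> sgraph \<Rightarrow> (nat \<Rightarrow> nat) \<Rightarrow> bool" where
  "sg_iso G H \<sigma> \<longleftrightarrow>
     nverts H = nverts G \<and> nedges H = nedges G \<and> length (leg H) = length (leg G) \<and>
     \<sigma> permutes {..<nedges G} \<and>
     (\<exists>\<pi>. \<pi> permutes {..<nverts G} \<and>
        (\<forall>v<nverts G. wt H ! \<pi> v = wt G ! v) \<and>
        (\<forall>j<nedges G. edg H ! \<sigma> j = (\<pi> (fst (edg G ! j)), \<pi> (snd (edg G ! j))) \<or>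
                      edg H ! \<sigma> j = (\<pi> (snd (edg G ! j)), \<pi> (fst (edg G ! j)))) \<and>
        (\<forall>i<length (leg G). leg H ! i = \<pi> (leg G ! i)))"

text \<open>The free Q-vector space on ordered stable graphs: finitely supported functions.\<close>
definition free_space :: "nat \<Rightarrow> rat list \<Rightarrow> (sgraph \<Rightarrow> rat) set" where
  "free_space g A = {f. finite {x. f x \<noteq> 0} \<and> (\<forall>x. f x \<noteq> 0 \<longrightarrow> stable_graph g A x)}"

definition delta :: "sgraph \<Rightarrow> sgraph \<Rightarrow> rat" where
  "delta x = (\<lambda>y. if y = x then 1 else 0)"

text \<open>The subspace spanned by the relations [G,\<omega>] - sgn(\<sigma>)[G',\<omega>'];
G^(g,A) is free_space g A modulo rel_space g A.\<close>
inductive_set rel_space :: "nat \<Rightarrow> rat list \<Rightarrow> (sgraph \<Rightarrow> rat) set" for g A where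
  zero: "(\<lambda>_. 0) \<in> rel_space g A"
| step: "\<lbrakk> f \<in> rel_space g A; stable_graph g A x; stable_graph g A y; sg_iso x y \<sigma> \<rbrakk>
         \<Longrightarrow> (\<lambda>z. f z + c * (delta x z - of_int (sign \<sigma>) * delta y z)) \<in> rel_space g A"

text \<open>Contraction of the non-loop edge j: its larger endpoint is merged into the smaller
one, vertices above it are renumbered down, the edge is removed from the order.\<close>
definition contract :: "sgraph \<Rightarrow> nat \<Rightarrow> sgraph" where
  "contract G j =
     (let a = fst (edg G ! j); b = snd (edg G ! j); lo = min a b; hi = max a b;
          ren = (\<lambda>v. if v = hi then lo else if hi < v then v - 1 else v);
          w = (wt G)[lo := wt G ! lo + wt G ! hi]
      in \<lparr> wt = take hi w @ drop (Suc hi) w,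
           edg = map (\<lambda>(u, v). (ren u, ren v)) (take j (edg G) @ drop (Suc j) (edg G)),
           leg = map ren (leg G) \<rparr>)"

definition diff :: "(sgraph \<Rightarrow> rat) \<Rightarrow> (sgraph \<Rightarrow> rat)" where
  "diff f = (\<lambda>y. \<Sum>x\<in>{x. f x \<noteq> 0}. f x *
      (\<Sum>j\<in>{j. j < nedges x \<and> fst (edg x ! j) \<noteq> snd (edg x ! j) \<and> contract x j = y}.
          (-1) ^ j))"

definition push :: "(sgraph \<Rightarrow> sgraph) \<Rightarrow> (sgraph \<Rightarrow> rat) \<Rightarrow> (sgraph \<Rightarrow> rat)" where
  "push h f = (\<lambda>y. \<Sum>x\<in>{x. f x \<noteq> 0 \<and> h x = y}. f x)"

definition relabel :: "(nat \<Rightarrow> nat) \<Rightarrow> sgraph \<Rightarrow> sgraph" where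
  "relabel \<tau> G = G\<lparr>leg := permute_list \<tau> (leg G)\<rparr>"

text \<open>The map [G,\<omega>] \<mapsto> [h G,\<omega>] is a well-defined injective chain map
G^(g,A) \<rightarrow> G^(g,B).\<close>
definition injective_chain_map :: "nat \<Rightarrow> rat list \<Rightarrow> rat list \<Rightarrow> (sgraph \<Rightarrow> sgraph) \<Rightarrow> bool" where
  "injective_chain_map g A B h \<longleftrightarrow>
     (\<forall>G. stable_graph g A G \<longrightarrow> stable_graph g B (h G) \<and> nedges (h G) = nedges G) \<and>
     (\<forall>f\<in>free_space g A. f \<in> rel_space g A \<longrightarrow> push h f \<in> rel_space g B) \<and>
     (\<forall>f\<in>free_space g A. (\<lambda>y. push h (diff f) y - diff (push h f) y) \<in> rel_space g B) \<and>
     (\<forall>f\<in>free_space g A. push h f \<in> rel_space g B \<longrightarrow> f \<in> rel_space g A)"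

end

theory Submission
  imports Defs
begin


lemma relabel_simps[simp]:
  "wt (relabel t G) = wt G" "edg (relabel t G) = edg G" "leg (relabel t G) = permute_list t (leg G)"
  by (simp_all add: relabel_def)

lemma relabel_same[simp]:
  "nverts (relabel t G) = nverts G" "nedges (relabel t G) = nedges G"
  "adjacent (relabel t G) = adjacent G" "connected_sg (relabel t G) = connected_sg G"
  "betti1 (relabel t G) = betti1 G" "edge_valence (relabel t G) = edge_valence G"
  by (simp_all add: nverts_def nedges_def adjacent_def[abs_def] connected_sg_def betti1_def
      edge_valence_def[abs_def])

lemma relabel_inv:
  assumes "t permutes {..<n}" "r permutes {..<n}" "t \<circ> r = id" "length (leg G) = n"
  shows "relabel r (relabel t G) = G"
proof -
  have "permute_list r (permute_list t (leg G)) = leg G"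
    using permute_list_compose[of r "leg G" t] assms by simp
  then show ?thesis by (simp add: relabel_def)
qed

lemma contract_relabel:
  assumes "t permutes {..<n}" "length (leg G) = n"
  shows "contract (relabel t G) j = relabel t (contract G j)"
  using assms by (simp add: contract_def Let_def relabel_def permute_list_map)



lemma iso_relabel:
  assumes "sg_iso x y s" "length (leg x) = n" "t permutes {..<n}"
  shows "sg_iso (relabel t x) (relabel t y) s"
proof -
  from assms(1) obtain p where p: "p permutes {..<nverts x}"
    "\<forall>v<nverts x. wt y ! p v = wt x ! v"
    "\<forall>j<nedges x. edg y ! s j = (p (fst (edg x ! j)), p (snd (edg x ! j))) \<or>
                      edg y ! s j = (p (snd (edg x ! j)), p (fst (edg x ! j)))"
    "\<forall>i<length (leg x). leg y ! i = p (leg x ! i)"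
    and b: "nverts y = nverts x" "nedges y = nedges x" "length (leg y) = length (leg x)"
      "s permutes {..<nedges x}"
    unfolding sg_iso_def by blast
  have "\<forall>i<length (leg x). permute_list t (leg y) ! i = p (permute_list t (leg x) ! i)"
  proof (intro allI impI)
    fix i assume i: "i < length (leg x)"
    have ti: "t i < n" using permutes_in_image[OF assms(3)] i assms(2) by auto
    show "permute_list t (leg y) ! i = p (permute_list t (leg x) ! i)"
      using permute_list_nth[of t "leg y" i] permute_list_nth[of t "leg x" i] assms i b p(4) ti
      by auto
  qed
  then show ?thesis unfolding sg_iso_def using p b by auto
qed

lemma iso_sym:
  assumes "sg_iso x y s"
  shows "sg_iso y x (inv s)"
proof -
  from assms(1) obtain p where p: "p permutes {..<nverts x}"
    "\<forall>v<nverts x. wt y ! p v = wt x ! v"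
    "\<forall>j<nedges x. edg y ! s j = (p (fst (edg x ! j)), p (snd (edg x ! j))) \<or>
                      edg y ! s j = (p (snd (edg x ! j)), p (fst (edg x ! j)))"
    "\<forall>i<length (leg x). leg y ! i = p (leg x ! i)"
    and b: "nverts y = nverts x" "nedges y = nedges x" "length (leg y) = length (leg x)"
      "s permutes {..<nedges x}"
    unfolding sg_iso_def by blast
  have q: "inv p permutes {..<nverts y}" using permutes_inv[OF p(1)] b by simp
  have w: "\<forall>v<nverts y. wt x ! inv p v = wt y ! v"
  proof (intro allI impI)
    fix v assume "v < nverts y"
    then have "inv p v < nverts x" using permutes_in_image[OF q] b by auto
    then show "wt x ! inv p v = wt y ! v" using p(2) permutes_inverses[OF p(1)] by metis
  qed
  have e: "\<forall>j<nedges y. edg x ! inv s j = (inv p (fst (edg y ! j)), inv p (snd (edg y ! j))) \<or>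
                      edg x ! inv s j = (inv p (snd (edg y ! j)), inv p (fst (edg y ! j)))"
  proof (intro allI impI)
    fix j assume j: "j < nedges y"
    have k: "inv s j < nedges x" using permutes_in_image[OF permutes_inv[OF b(4)]] j b by auto
    have sj: "s (inv s j) = j" using permutes_inverses[OF b(4)] by simp
    have ip: "\<And>z. inv p (p z) = z" using permutes_inverses[OF p(1)] by simp
    show "edg x ! inv s j = (inv p (fst (edg y ! j)), inv p (snd (edg y ! j))) \<or>
                      edg x ! inv s j = (inv p (snd (edg y ! j)), inv p (fst (edg y ! j)))"
      using p(3)[rule_format, OF k] unfolding sj
      by (cases "edg x ! inv s j") (auto simp: ip)
  qed
  have l: "\<forall>i<length (leg y). leg x ! i = inv p (leg y ! i)"
    using p(4) b permutes_inverses[OF p(1)] by auto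
  show ?thesis unfolding sg_iso_def
    using q w e l b permutes_inv[OF b(4)] by auto
qed



lemma iso_stable:
  assumes "sg_iso x y s" "stable_graph g A x"
  shows "stable_graph g A y"
proof -
  from assms(1) obtain p where p: "p permutes {..<nverts x}"
    "\<forall>v<nverts x. wt y ! p v = wt x ! v"
    "\<forall>j<nedges x. edg y ! s j = (p (fst (edg x ! j)), p (snd (edg x ! j))) \<or>
                      edg y ! s j = (p (snd (edg x ! j)), p (fst (edg x ! j)))"
    "\<forall>i<length (leg x). leg y ! i = p (leg x ! i)"
    and b: "nverts y = nverts x" "nedges y = nedges x" "length (leg y) = length (leg x)"
      "s permutes {..<nedges x}"
    unfolding sg_iso_def by blast
  note st = assms(2)[unfolded stable_graph_def]
  have pin: "\<And>z. p z < nverts x \<longleftrightarrow> z < nverts x" using permutes_in_image[OF p(1)] by simp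
  have sin: "\<And>z. s z < nedges x \<longleftrightarrow> z < nedges x" using permutes_in_image[OF b(4)] by simp
  have pinj: "\<And>a c. p a = p c \<longleftrightarrow> a = c" using permutes_inj[OF p(1)] by (auto dest: injD)
  have ip: "\<And>z. p (inv p z) = z" using permutes_inverses[OF p(1)] by simp
  have is': "\<And>z. s (inv s z) = z" using permutes_inverses[OF b(4)] by simp
  have isin: "\<And>z. z < nedges x \<Longrightarrow> inv s z < nedges x"
    using permutes_in_image[OF permutes_inv[OF b(4)]] by simp
  have ipin: "\<And>z. z < nverts x \<Longrightarrow> inv p z < nverts x"
    using permutes_in_image[OF permutes_inv[OF p(1)]] by simp
  have c1: "\<forall>i<length A. leg y ! i < nverts y" using st p(4) b pin by auto
  have c2: "\<forall>j<nedges y. fst (edg y ! j) < nverts y \<and> snd (edg y ! j) < nverts y"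
  proof (intro allI impI)
    fix j assume j: "j < nedges y"
    have k: "inv s j < nedges x" using isin j b by simp
    show "fst (edg y ! j) < nverts y \<and> snd (edg y ! j) < nverts y"
      using p(3)[rule_format, OF k] st k b pin unfolding is' by auto
  qed
  have adj: "adjacent y (p u) (p v)" if "adjacent x u v" for u v
  proof -
    from that obtain j where j: "j < nedges x" "edg x ! j = (u, v) \<or> edg x ! j = (v, u)"
      unfolding adjacent_def by blast
    have "s j < nedges y" using sin j b by simp
    then show ?thesis using p(3)[rule_format, OF j(1)] j(2) unfolding adjacent_def by auto
  qed
  have path: "(adjacent y)\<^sup>*\<^sup>* (p u) (p v)" if "(adjacent x)\<^sup>*\<^sup>* u v" for u v
    using that
  proof (induction rule: rtranclp_induct)
    case base then show ?case by simp
  next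
    case (step v w) then show ?case using adj by (meson rtranclp.rtrancl_into_rtrancl)
  qed
  have c3: "connected_sg y" unfolding connected_sg_def
  proof (intro allI impI)
    fix u v assume u: "u < nverts y" and v: "v < nverts y"
    have "(adjacent x)\<^sup>*\<^sup>* (inv p u) (inv p v)"
      using st ipin u v b unfolding connected_sg_def by auto
    from path[OF this] show "(adjacent y)\<^sup>*\<^sup>* u v" by (simp add: ip)
  qed
  have sl: "sum_list (wt y) = sum_list (wt x)"
  proof -
    have "sum_list (wt y) = (\<Sum>v<nverts x. wt y ! v)"
      using b by (simp add: sum_list_sum_nth nverts_def atLeast0LessThan)
    also have "\<dots> = (\<Sum>v<nverts x. wt y ! p v)"
      using sum.permute[OF p(1), of "\<lambda>v. wt y ! v"] by (simp add: o_def)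
    also have "\<dots> = (\<Sum>v<nverts x. wt x ! v)" using p(2) by simp
    also have "\<dots> = sum_list (wt x)" by (simp add: sum_list_sum_nth nverts_def atLeast0LessThan)
    finally show ?thesis .
  qed
  have ev: "edge_valence y (p u) = edge_valence x u" for u
  proof -
    define c where "c = (\<lambda>(e::nat\<times>nat) v. (if fst e = v then 1 else 0) + (if snd e = v then (1::nat) else 0))"
    have "edge_valence y (p u) = (\<Sum>j<nedges x. c (edg y ! j) (p u))"
      using b by (simp add: edge_valence_def c_def)
    also have "\<dots> = (\<Sum>j<nedges x. c (edg y ! s j) (p u))"
      using sum.permute[OF b(4), of "\<lambda>j. c (edg y ! j) (p u)"] by (simp add: o_def)
    also have "\<dots> = (\<Sum>j<nedges x. c (edg x ! j) u)"
    proof (rule sum.cong[OF refl])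
      fix j assume "j \<in> {..<nedges x}"
      then show "c (edg y ! s j) (p u) = c (edg x ! j) u"
        using p(3) by (cases "edg x ! j") (auto simp: c_def pinj)
    qed
    also have "\<dots> = edge_valence x u" by (simp add: edge_valence_def c_def)
    finally show ?thesis .
  qed
  have lw: "leg_weight A y (p u) = leg_weight A x u" for u
    unfolding leg_weight_def using p(4) st by (intro sum.cong) (auto simp: pinj)
  have c4: "\<forall>v<nverts y. 2 * of_nat (wt y ! v) - 2 + of_nat (edge_valence y v)
                     + leg_weight A y v > (0::rat)"
  proof (intro allI impI)
    fix v assume v: "v < nverts y"
    have u: "inv p v < nverts x" using ipin v b by simp
    have "wt y ! v = wt x ! inv p v" using p(2) u ip by metis
    moreover have "edge_valence y v = edge_valence x (inv p v)" using ev[of "inv p v"] ip by simp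
    moreover have "leg_weight A y v = leg_weight A x (inv p v)" using lw[of "inv p v"] ip by simp
    ultimately show "2 * of_nat (wt y ! v) - 2 + of_nat (edge_valence y v)
                     + leg_weight A y v > (0::rat)" using st u by simp
  qed
  show ?thesis unfolding stable_graph_def
    using c1 c2 c3 c4 sl st b by (simp add: betti1_def)
qed



lemma lw_orig:
  assumes "length A = n"
  shows "leg_weight A G v = wsum A {k. k<n \<and> leg G ! k = v}"
proof -
  have "leg_weight A G v = (\<Sum>k\<in>{..<n}. if leg G ! k = v then A ! k else 0)"
    using assms by (simp add: leg_weight_def)
  also have "\<dots> = (\<Sum>k\<in>{..<n} \<inter> {k. leg G ! k = v}. A ! k)"
    by (simp add: sum.inter_restrict)
  also have "{..<n} \<inter> {k. leg G ! k = v} = {k. k<n \<and> leg G ! k = v}" by auto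
  finally show ?thesis by (simp add: wsum_def)
qed

lemma lw_relabel:
  assumes "length (leg G) = n" "length B = n" "r permutes {..<n}"
  shows "leg_weight B (relabel (inv r) G) v = wsum B (r ` {k. k<n \<and> leg G ! k = v})"
proof -
  have ir: "inv r permutes {..<n}" using permutes_inv[OF assms(3)] .
  have "leg_weight B (relabel (inv r) G) v = (\<Sum>i<n. if leg G ! (inv r i) = v then B ! i else 0)"
    unfolding leg_weight_def assms(2)
  proof (rule sum.cong[OF refl])
    fix i assume "i \<in> {..<n}"
    then have "permute_list (inv r) (leg G) ! i = leg G ! (inv r i)"
      using permute_list_nth[of "inv r" "leg G" i] ir assms(1) by simp
    then show "(if leg (relabel (inv r) G) ! i = v then B ! i else 0) =
         (if leg G ! inv r i = v then B ! i else 0)" by simp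
  qed
  also have "\<dots> = (\<Sum>k<n. if leg G ! (inv r (r k)) = v then B ! (r k) else 0)"
    using sum.permute[OF assms(3), of "\<lambda>i. if leg G ! (inv r i) = v then B ! i else 0"]
    unfolding o_def by simp
  also have "\<dots> = (\<Sum>k<n. if leg G ! k = v then B ! (r k) else 0)"
    using permutes_inverses(2)[OF assms(3)] by simp
  also have "\<dots> = (\<Sum>k\<in>{..<n} \<inter> {k. leg G ! k = v}. B ! (r k))"
    by (simp add: sum.inter_restrict)
  also have "{..<n} \<inter> {k. leg G ! k = v} = {k. k<n \<and> leg G ! k = v}" by auto
  also have "(\<Sum>k\<in>{k. k<n \<and> leg G ! k = v}. B ! (r k)) = wsum B (r ` {k. k<n \<and> leg G ! k = v})"
  proof -
    have "inj_on r {k. k<n \<and> leg G ! k = v}" using permutes_inj[OF assms(3)] inj_on_subset by blast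
    then show ?thesis unfolding wsum_def by (simp add: sum.reindex)
  qed
  finally show ?thesis .
qed

lemma wsum_bounds:
  assumes "\<forall>i<length B. 0 < B ! i \<and> B ! i \<le> 1" "T \<subseteq> {..<length B}"
  shows "0 \<le> wsum B T" "wsum B T \<le> of_nat (card T)" "T \<noteq> {} \<Longrightarrow> 0 < wsum B T"
    "wsum B T + of_nat (length B - card T) \<ge> sum_list B"
proof -
  have fin: "finite T" using assms(2) finite_subset by blast
  show "0 \<le> wsum B T" unfolding wsum_def using assms by (intro sum_nonneg) (auto simp: less_imp_le)
  have "wsum B T \<le> (\<Sum>i\<in>T. 1)" unfolding wsum_def using assms by (intro sum_mono) auto
  then show "wsum B T \<le> of_nat (card T)" by simp
  show "T \<noteq> {} \<Longrightarrow> 0 < wsum B T" unfolding wsum_def using assms fin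
    by (intro sum_pos) auto
  have "sum_list B = (\<Sum>i\<in>{..<length B}. B ! i)"
    by (simp add: sum_list_sum_nth atLeast0LessThan)
  also have "\<dots> = wsum B T + (\<Sum>i\<in>{..<length B} - T. B ! i)"
    using sum.subset_diff[OF assms(2) finite_lessThan, of "\<lambda>i. B ! i"]
    by (simp add: add.commute wsum_def)
  also have "(\<Sum>i\<in>{..<length B} - T. B ! i) \<le> (\<Sum>i\<in>{..<length B} - T. 1)"
    using assms by (intro sum_mono) auto
  also have "(\<Sum>i\<in>{..<length B} - T. (1::rat)) = of_nat (length B - card T)"
    using assms(2) fin by (simp add: card_Diff_subset)
  finally show "wsum B T + of_nat (length B - card T) \<ge> sum_list B" by simp
qed



lemma ev_pos:
  assumes "j < nedges G" "fst (edg G ! j) = v \<or> snd (edg G ! j) = v"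
  shows "1 \<le> edge_valence G v"
proof -
  let ?f = "\<lambda>j. (if fst (edg G ! j) = v then 1 else 0) + (if snd (edg G ! j) = v then 1 else (0::nat))"
  have "1 \<le> ?f j" using assms(2) by auto
  also have "?f j \<le> sum ?f {..<nedges G}"
    using assms(1) by (intro member_le_sum) auto
  finally show ?thesis by (simp add: edge_valence_def)
qed

lemma isolated:
  assumes "stable_graph g A G" "v < nverts G" "edge_valence G v = 0"
  shows "nverts G = 1 \<and> nedges G = 0"
proof -
  note st = assms(1)[unfolded stable_graph_def]
  have nv: "nverts G = 1"
  proof (rule ccontr)
    assume "nverts G \<noteq> 1"
    then obtain u where u: "u < nverts G" "u \<noteq> v" using assms(2)
      by (metis One_nat_def less_one linorder_neqE_nat not_less0 st)
    have "(adjacent G)\<^sup>*\<^sup>* v u" using st u assms(2) unfolding connected_sg_def by blast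
    then obtain x where "adjacent G v x" using u(2) by (metis converse_rtranclpE)
    then obtain j where "j < nedges G" "edg G ! j = (v, x) \<or> edg G ! j = (x, v)"
      unfolding adjacent_def by blast
    then have "1 \<le> edge_valence G v" by (intro ev_pos) auto
    then show False using assms(3) by simp
  qed
  have "nedges G = 0"
  proof (rule ccontr)
    assume "nedges G \<noteq> 0"
    then have j: "0 < nedges G" by simp
    then have "fst (edg G ! 0) < 1" using st nv by auto
    moreover have "v = 0" using assms(2) nv by simp
    ultimately have "1 \<le> edge_valence G v" using j by (intro ev_pos) auto
    then show False using assms(3) by simp
  qed
  with nv show ?thesis by simp
qed

lemma stable_transfer:
  assumes st0: "stable_graph g A G" and lA: "length A = n" and lB: "length B = n"
    and wA: "weight_datum g A" and wB: "weight_datum g B" and r: "r permutes {..<n}"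
    and ch: "\<forall>T. wall_set g n T \<longrightarrow> wsum A T > 1 \<longrightarrow> wsum B (r ` T) > 1"
  shows "stable_graph g B (relabel (inv r) G)"
proof -
  note st = st0[unfolded stable_graph_def]
  have lG: "length (leg G) = n" using st lA by simp
  have ir: "inv r permutes {..<n}" using permutes_inv[OF r] .
  have Bb: "\<forall>i<length B. 0 < B ! i \<and> B ! i \<le> 1" using wB unfolding weight_datum_def by blast
  have Ab: "\<forall>i<length A. 0 < A ! i \<and> A ! i \<le> 1" using wA unfolding weight_datum_def by blast
  have c1: "\<forall>i<length B. leg (relabel (inv r) G) ! i < nverts G"
  proof (intro allI impI)
    fix i assume i: "i < length B"
    have "inv r i < n" using permutes_in_image[OF ir] i lB by simp
    then show "leg (relabel (inv r) G) ! i < nverts G"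
      using permute_list_nth[of "inv r" "leg G" i] ir lG i lB st lA by simp
  qed
  have c4: "2 * of_nat (wt G ! v) - 2 + of_nat (edge_valence G v)
                     + leg_weight B (relabel (inv r) G) v > (0::rat)" if v: "v < nverts G" for v
  proof -
    define T where "T = {k. k<n \<and> leg G ! k = v}"
    define c where "c = 2 * int (wt G ! v) - 2 + int (edge_valence G v)"
    have cq: "2 * of_nat (wt G ! v) - 2 + of_nat (edge_valence G v) = (of_int c :: rat)"
      by (simp add: c_def)
    have T: "T \<subseteq> {..<n}" by (auto simp: T_def)
    have rT: "r ` T \<subseteq> {..<n}" using T permutes_image[OF r] by blast
    have cardrT: "card (r ` T) = card T"
      using permutes_inj[OF r] by (simp add: card_image inj_on_subset)
    have a: "of_int c + wsum A T > 0"
    proof -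
      have "2 * of_nat (wt G ! v) - 2 + of_nat (edge_valence G v) + leg_weight A G v > (0::rat)"
        using st v by blast
      then show ?thesis using cq lw_orig[OF lA, of G v] unfolding T_def by simp
    qed
    have bdef: "leg_weight B (relabel (inv r) G) v = wsum B (r ` T)"
      using lw_relabel[OF lG lB r] unfolding T_def by simp
    note aB = wsum_bounds[OF Ab, unfolded lA, OF T]
    note bB = wsum_bounds[OF Bb, unfolded lB, OF rT, unfolded cardrT]
    have sB: "2 * of_nat g - 2 + sum_list B > 0" using wB unfolding weight_datum_def by blast
    have "wsum B (r ` T) > - of_int c"
    proof -
      consider "c \<ge> 1" | "c = 0" | "c = -1" | "c = -2" unfolding c_def by linarith
      then show ?thesis
      proof cases
        case 1 then show ?thesis using bB(1) by simp
      next
        case 2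
        then have "T \<noteq> {}" using a aB by (auto simp: wsum_def)
        then show ?thesis using bB(3) 2 by simp
      next
        case 3
        then have a1: "wsum A T > 1" using a by simp
        then have "card T \<ge> 2" using aB(2) by simp
        show ?thesis
        proof (cases "wall_set g n T")
          case True then show ?thesis using ch a1 3 by simp
        next
          case False
          then have "g = 0" "card T + 2 > n" using T \<open>card T \<ge> 2\<close> unfolding wall_set_def by auto
          then have "of_nat (n - card T) \<le> (1::rat)" by simp
          then show ?thesis using bB(4) sB \<open>g = 0\<close> 3 by simp
        qed
      next
        case 4
        then have w0: "wt G ! v = 0" and e0: "edge_valence G v = 0" unfolding c_def by auto
        from isolated[OF st0 v e0] have nv: "nverts G = 1" and ne: "nedges G = 0" by auto
        have v0: "v = 0" using v nv by simp
        have "sum_list (wt G) = 0" using w0 nv v0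
          by (cases "wt G") (auto simp: nverts_def)
        moreover have "betti1 G + sum_list (wt G) = g" using st by blast
        moreover have "betti1 G = 0" using nv ne by (simp add: betti1_def)
        ultimately have g0: "g = 0" by linarith
        have "T = {..<n}" unfolding T_def using st lA nv v0 by auto
        then have "card T = n" by simp
        then show ?thesis using bB(4) sB g0 4 by simp
      qed
    qed
    then show ?thesis using cq bdef by simp
  qed
  show ?thesis unfolding stable_graph_def using st c1 c4 lA lB by simp
qed



lemma length_leg_contract[simp]: "length (leg (contract G j)) = length (leg G)"
  by (simp add: contract_def Let_def)

lemma relabel_length[simp]: "length (leg (relabel t G)) = length (leg G)" by simp

lemma push_char:
  assumes t: "t permutes {..<n}" and r: "r permutes {..<n}" and tr: "t \<circ> r = id" and rt: "r \<circ> t = id"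
    and f: "\<forall>x. f x \<noteq> 0 \<longrightarrow> length (leg x) = n"
  shows "push (relabel t) f y = (if length (leg y) = n then f (relabel r y) else 0)"
proof -
  have "{x. f x \<noteq> 0 \<and> relabel t x = y} =
        (if length (leg y) = n \<and> f (relabel r y) \<noteq> 0 then {relabel r y} else {})"
  proof (cases "length (leg y) = n \<and> f (relabel r y) \<noteq> 0")
    case True
    have "relabel t (relabel r y) = y" using relabel_inv[OF r t rt] True by simp
    moreover have "x = relabel r y" if "f x \<noteq> 0" "relabel t x = y" for x
      using relabel_inv[OF t r tr, of x] that f by simp
    ultimately show ?thesis using True by auto
  next
    case False
    have "False" if "f x \<noteq> 0" "relabel t x = y" for x
    proof -
      have "relabel r y = x" using relabel_inv[OF t r tr, of x] that f by simp
      then show False using that f False by auto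
    qed
    then show ?thesis using False by auto
  qed
  then show ?thesis unfolding push_def by auto
qed

lemma fwd_rel:
  assumes t: "t permutes {..<n}" and r: "r permutes {..<n}" and tr: "t \<circ> r = id" and rt: "r \<circ> t = id"
    and lA: "length A = n"
    and stab: "\<forall>x. stable_graph g A x \<longrightarrow> stable_graph g B (relabel t x)"
    and f: "f \<in> rel_space g A"
  shows "(\<lambda>y. if length (leg y) = n then f (relabel r y) else 0) \<in> rel_space g B"
  using f
proof (induction rule: rel_space.induct)
  case zero
  have "(\<lambda>y. if length (leg y) = n then (0::rat) else 0) = (\<lambda>_. 0)" by auto
  then show ?case using rel_space.zero by simp
next
  case (step f x y s c)
  have lx: "length (leg x) = n" and ly: "length (leg y) = n"
    using step.hyps lA unfolding stable_graph_def by auto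
  have dl: "delta u (relabel r z) = delta (relabel t u) z" if "length (leg u) = n" "length (leg z) = n" for u z
  proof -
    have "(relabel r z = u) = (z = relabel t u)"
      using relabel_inv[OF t r tr, of u] relabel_inv[OF r t rt, of z] that by auto
    then show ?thesis by (simp add: delta_def)
  qed
  have d0: "delta (relabel t u) z = 0" if "length (leg u) = n" "length (leg z) \<noteq> n" for u z
    using that by (auto simp: delta_def)
  have eq: "(\<lambda>z. if length (leg z) = n then f (relabel r z) + c * (delta x (relabel r z) - of_int (sign s) * delta y (relabel r z)) else 0)
     = (\<lambda>z. (if length (leg z) = n then f (relabel r z) else 0) + c * (delta (relabel t x) z - of_int (sign s) * delta (relabel t y) z))"
    using dl[OF lx] dl[OF ly] d0[OF lx] d0[OF ly] by (auto simp: fun_eq_iff)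
  have "(\<lambda>z. (if length (leg z) = n then f (relabel r z) else 0) + c * (delta (relabel t x) z - of_int (sign s) * delta (relabel t y) z)) \<in> rel_space g B"
    by (rule rel_space.step[OF step.IH]) (use stab step.hyps iso_relabel[OF _ lx t] in auto)
  then show ?case using eq by simp
qed

lemma bwd_rel:
  assumes t: "t permutes {..<n}" and r: "r permutes {..<n}" and tr: "t \<circ> r = id" and rt: "r \<circ> t = id"
    and lA: "length A = n"
    and F: "F \<in> rel_space g B"
  shows "(\<lambda>z. if length (leg z) = n \<and> stable_graph g A z then F (relabel t z) else 0) \<in> rel_space g A"
  using F
proof (induction rule: rel_space.induct)
  case zero
  have "(\<lambda>z. if length (leg z) = n \<and> stable_graph g A z then (0::rat) else 0) = (\<lambda>_. 0)" by auto
  then show ?case using rel_space.zero by simp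
next
  case (step F x y s c)
  define I where "I = (\<lambda>x. length (leg x) = n \<and> stable_graph g A (relabel r x))"
  define P where "P = (\<lambda>F z. if length (leg z) = n \<and> stable_graph g A z then F (relabel t z) else (0::rat))"
  have dI: "P (delta u) = delta (relabel r u)" if "I u" for u
  proof
    fix z
    have lu: "length (leg u) = n" and su: "stable_graph g A (relabel r u)" using that unfolding I_def by auto
    have "(length (leg z) = n \<and> stable_graph g A z \<and> relabel t z = u) = (z = relabel r u)"
    proof
      assume "length (leg z) = n \<and> stable_graph g A z \<and> relabel t z = u"
      then show "z = relabel r u" using relabel_inv[OF t r tr, of z] by metis
    next
      assume z: "z = relabel r u"
      have "relabel t z = u" unfolding z using relabel_inv[OF r t rt lu] .
      moreover have "length (leg z) = n" unfolding z using lu by simp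
      ultimately show "length (leg z) = n \<and> stable_graph g A z \<and> relabel t z = u" using su z by simp
    qed
    then show "P (delta u) z = delta (relabel r u) z" unfolding P_def delta_def by auto
  qed
  have dN: "P (delta u) = (\<lambda>_. 0)" if "\<not> I u" for u
  proof
    fix z
    have "False" if a: "length (leg z) = n" "stable_graph g A z" "relabel t z = u"
    proof -
      have "relabel r u = z" using relabel_inv[OF t r tr a(1)] a(3) by simp
      moreover have "length (leg u) = n" using a by auto
      ultimately have "I u" using a(2) unfolding I_def by simp
      then show False using \<open>\<not> I u\<close> by simp
    qed
    then show "P (delta u) z = 0" unfolding P_def delta_def by auto
  qed
  have lxy: "length (leg y) = length (leg x)" using step.hyps unfolding sg_iso_def by auto
  have Ixy: "I x = I y"
  proof
    assume "I x"
    then have lx: "length (leg x) = n" unfolding I_def by simp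
    have "sg_iso (relabel r x) (relabel r y) s" using iso_relabel[OF step.hyps(4) lx r] .
    then show "I y" using iso_stable \<open>I x\<close> lxy lx unfolding I_def by auto
  next
    assume "I y"
    then have ly: "length (leg y) = n" unfolding I_def by simp
    have "sg_iso (relabel r y) (relabel r x) (inv s)" using iso_relabel[OF iso_sym[OF step.hyps(4)] ly r] .
    then show "I x" using iso_stable \<open>I y\<close> lxy ly unfolding I_def by auto
  qed
  have lin: "P (\<lambda>z. F z + c * (delta x z - of_int (sign s) * delta y z)) =
      (\<lambda>z. P F z + c * (P (delta x) z - of_int (sign s) * P (delta y) z))"
    unfolding P_def by (rule ext) simp
  show ?case
  proof (cases "I x")
    case True
    then have "I y" using Ixy by simp
    have PF: "P F \<in> rel_space g A" using step.IH unfolding P_def .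
    have sx: "stable_graph g A (relabel r x)" using True unfolding I_def by blast
    have sy: "stable_graph g A (relabel r y)" using \<open>I y\<close> unfolding I_def by blast
    have lx: "length (leg x) = n" using True unfolding I_def by blast
    have "(\<lambda>z. P F z + c * (delta (relabel r x) z - of_int (sign s) * delta (relabel r y) z)) \<in> rel_space g A"
      by (rule rel_space.step[OF PF sx sy iso_relabel[OF step.hyps(4) lx r]])
    then have "P (\<lambda>z. F z + c * (delta x z - of_int (sign s) * delta y z)) \<in> rel_space g A"
      unfolding lin dI[OF True] dI[OF \<open>I y\<close>] .
    then show ?thesis unfolding P_def .
  next
    case False
    then have "\<not> I y" using Ixy by simp
    have "P (\<lambda>z. F z + c * (delta x z - of_int (sign s) * delta y z)) = P F"
      using lin dN[OF False] dN[OF \<open>\<not> I y\<close>] by simp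
    moreover have "P F \<in> rel_space g A" using step.IH unfolding P_def .
    ultimately show ?thesis unfolding P_def by simp
  qed
qed



definition inner :: "sgraph \<Rightarrow> sgraph \<Rightarrow> rat" where
  "inner x y = (\<Sum>j\<in>{j. j < nedges x \<and> fst (edg x ! j) \<noteq> snd (edg x ! j) \<and> contract x j = y}. (-1) ^ j)"

lemma diff_inner: "diff f y = (\<Sum>x\<in>{x. f x \<noteq> 0}. f x * inner x y)"
  by (simp add: diff_def inner_def)

lemma diff_push:
  assumes t: "t permutes {..<n}" and r: "r permutes {..<n}" and tr: "t \<circ> r = id" and rt: "r \<circ> t = id"
    and f: "f \<in> free_space g A" and lA: "length A = n"
  shows "push (relabel t) (diff f) = diff (push (relabel t) f)"
proof
  fix y
  define S where "S = {x. f x \<noteq> 0}"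
  have finS: "finite S" using f unfolding free_space_def S_def by blast
  have lS: "\<forall>x. f x \<noteq> 0 \<longrightarrow> length (leg x) = n"
    using f lA unfolding free_space_def stable_graph_def by auto
  have ldiff: "\<forall>z. diff f z \<noteq> 0 \<longrightarrow> length (leg z) = n"
  proof (intro allI impI)
    fix z assume "diff f z \<noteq> 0"
    then have "(\<Sum>x\<in>S. f x * inner x z) \<noteq> 0" unfolding diff_inner S_def .
    then obtain x where x: "x \<in> S" "f x * inner x z \<noteq> 0"
      by (meson sum.not_neutral_contains_not_neutral)
    then have "inner x z \<noteq> 0" by simp
    then have "{j. j < nedges x \<and> fst (edg x ! j) \<noteq> snd (edg x ! j) \<and> contract x j = z} \<noteq> {}"
      unfolding inner_def by (metis sum.empty)
    then obtain j where "contract x j = z" by blast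
    then show "length (leg z) = n" using lS x unfolding S_def by auto
  qed
  have ph: "\<And>z. push (relabel t) f z = (if length (leg z) = n then f (relabel r z) else 0)"
    using push_char[OF t r tr rt lS] .
  have L: "push (relabel t) (diff f) y = (if length (leg y) = n then diff f (relabel r y) else 0)"
    using push_char[OF t r tr rt ldiff] .
  have hr: "\<And>x. length (leg x) = n \<Longrightarrow> relabel r (relabel t x) = x" using relabel_inv[OF t r tr] .
  have rh: "\<And>x. length (leg x) = n \<Longrightarrow> relabel t (relabel r x) = x" using relabel_inv[OF r t rt] .
  have supp: "{z. push (relabel t) f z \<noteq> 0} = relabel t ` S"
  proof (rule set_eqI, rule iffI)
    fix z assume "z \<in> {z. push (relabel t) f z \<noteq> 0}"
    then have z: "length (leg z) = n \<and> f (relabel r z) \<noteq> 0"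
      using ph[of z] by (cases "length (leg z) = n") simp_all
    have "z = relabel t (relabel r z)" using rh[of z] z by simp
    moreover have "relabel r z \<in> S" using z unfolding S_def by simp
    ultimately show "z \<in> relabel t ` S" by (rule image_eqI)
  next
    fix z assume "z \<in> relabel t ` S"
    then obtain x where x: "x \<in> S" "z = relabel t x" by blast
    then have lx: "length (leg x) = n" "f x \<noteq> 0" using lS unfolding S_def by auto
    have "push (relabel t) f z = f x" using ph[of z] x(2) hr[OF lx(1)] lx(1) by simp
    then show "z \<in> {z. push (relabel t) f z \<noteq> 0}" using lx by simp
  qed
  have inj: "inj_on (relabel t) S"
  proof (rule inj_onI)
    fix x z assume "x \<in> S" "z \<in> S" "relabel t x = relabel t z"
    then have "relabel r (relabel t x) = relabel r (relabel t z)" "length (leg x) = n" "length (leg z) = n"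
      using lS unfolding S_def by auto
    then show "x = z" using hr by simp
  qed
  have inn: "inner (relabel t x) y = (if length (leg y) = n then inner x (relabel r y) else 0)"
    if lx: "length (leg x) = n" for x
  proof -
    have e: "(relabel t (contract x j) = y) = (length (leg y) = n \<and> contract x j = relabel r y)" for j
    proof
      assume a: "relabel t (contract x j) = y"
      have lc: "length (leg (contract x j)) = n" using lx by simp
      have "length (leg y) = n" using a lc by auto
      moreover have "contract x j = relabel r y" using a hr[OF lc] by simp
      ultimately show "length (leg y) = n \<and> contract x j = relabel r y" by simp
    next
      assume "length (leg y) = n \<and> contract x j = relabel r y"
      then show "relabel t (contract x j) = y" using rh by simp
    qed
    have "{j. j < nedges x \<and> fst (edg x ! j) \<noteq> snd (edg x ! j) \<and> contract (relabel t x) j = y}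
       = {j. j < nedges x \<and> fst (edg x ! j) \<noteq> snd (edg x ! j) \<and> length (leg y) = n \<and> contract x j = relabel r y}"
      unfolding contract_relabel[OF t lx] e by simp
    note set_eq = this
    show ?thesis
    proof (cases "length (leg y) = n")
      case True
      then show ?thesis using set_eq unfolding inner_def relabel_same relabel_simps by simp
    next
      case False
      have E: "{j. j < nedges x \<and> fst (edg x ! j) \<noteq> snd (edg x ! j) \<and> contract (relabel t x) j = y} = {}"
        using set_eq False by simp
      show ?thesis unfolding inner_def relabel_same relabel_simps E using False by simp
    qed
  qed
  have "diff (push (relabel t) f) y = (\<Sum>z\<in>relabel t ` S. push (relabel t) f z * inner z y)"
    unfolding diff_inner supp ..
  also have "\<dots> = (\<Sum>x\<in>S. push (relabel t) f (relabel t x) * inner (relabel t x) y)"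
    using sum.reindex[OF inj] by simp
  also have "\<dots> = (\<Sum>x\<in>S. f x * (if length (leg y) = n then inner x (relabel r y) else 0))"
  proof (rule sum.cong[OF refl])
    fix x assume "x \<in> S"
    then have lx: "length (leg x) = n" using lS unfolding S_def by auto
    show "push (relabel t) f (relabel t x) * inner (relabel t x) y = f x * (if length (leg y) = n then inner x (relabel r y) else 0)"
      using ph[of "relabel t x"] hr[OF lx] lx inn[OF lx] by simp
  qed
  also have "\<dots> = (if length (leg y) = n then diff f (relabel r y) else 0)"
    unfolding diff_inner S_def by simp
  finally show "push (relabel t) (diff f) y = diff (push (relabel t) f) y" using L by simp
qed



lemma wsum_perm:
  assumes s: "s permutes {..<n}" and l: "length X = n" and S: "S \<subseteq> {..<n}"
  shows "wsum (permute_list s X) S = wsum X (s ` S)"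
proof -
  have "wsum (permute_list s X) S = (\<Sum>i\<in>S. X ! s i)"
    unfolding wsum_def using S l s by (intro sum.cong) (auto simp: permute_list_nth)
  also have "\<dots> = wsum X (s ` S)"
    unfolding wsum_def using permutes_inj[OF s] by (simp add: sum.reindex inj_on_subset)
  finally show ?thesis .
qed

lemma chamber_from_orbit:
  assumes s1: "s1 permutes {..<n}" and s2: "s2 permutes {..<n}" and lA: "length A = n" and lB: "length B = n"
    and ch: "chamber_le g (permute_list s1 A) (permute_list s2 B)"
  shows "\<forall>T. wall_set g n T \<longrightarrow> wsum A T > 1 \<longrightarrow> wsum B ((s2 \<circ> inv s1) ` T) > 1"
proof (intro allI impI)
  fix T assume w: "wall_set g n T" and a: "wsum A T > 1"
  define S where "S = inv s1 ` T"
  have is1: "inv s1 permutes {..<n}" using permutes_inv[OF s1] .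
  have T: "T \<subseteq> {..<n}" using w unfolding wall_set_def by simp
  have S: "S \<subseteq> {..<n}" unfolding S_def using T permutes_image[OF is1] by blast
  have cS: "card S = card T" unfolding S_def using permutes_inj[OF is1]
    by (simp add: card_image inj_on_subset)
  have wS: "wall_set g (length (permute_list s1 A)) S" using w cS S lA unfolding wall_set_def by simp
  have s1S: "s1 ` S = T" unfolding S_def image_comp permutes_inv_o(1)[OF s1] by simp
  have "wsum (permute_list s1 A) S > 1" using a wsum_perm[OF s1 lA S] s1S by simp
  then have "wsum (permute_list s2 B) S > 1" using ch wS unfolding chamber_le_def by blast
  then show "wsum B ((s2 \<circ> inv s1) ` T) > 1" using wsum_perm[OF s2 lB S] unfolding S_def image_comp by simp
qed

lemma step_map:
  assumes lA: "length A = n" and lB: "length B = n"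
    and wA: "weight_datum g A" and wB: "weight_datum g B"
    and o: "orbit_le g A B"
  shows "\<exists>\<tau>. \<tau> permutes {..<n} \<and> injective_chain_map g A B (relabel \<tau>)"
proof -
  obtain s1 s2 where s1: "s1 permutes {..<n}" and s2: "s2 permutes {..<n}"
    and ch: "chamber_le g (permute_list s1 A) (permute_list s2 B)"
    using o lA lB unfolding orbit_le_def by auto
  define r where "r = s2 \<circ> inv s1"
  have r: "r permutes {..<n}" unfolding r_def using permutes_compose[OF permutes_inv[OF s1] s2] .
  define t where "t = inv r"
  have t: "t permutes {..<n}" unfolding t_def using permutes_inv[OF r] .
  have tr: "t \<circ> r = id" unfolding t_def using permutes_inv_o(2)[OF r] .
  have rt: "r \<circ> t = id" unfolding t_def using permutes_inv_o(1)[OF r] .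
  have chT: "\<forall>T. wall_set g n T \<longrightarrow> wsum A T > 1 \<longrightarrow> wsum B (r ` T) > 1"
    using chamber_from_orbit[OF s1 s2 lA lB ch] unfolding r_def .
  have stab: "\<forall>x. stable_graph g A x \<longrightarrow> stable_graph g B (relabel t x)"
    using stable_transfer[OF _ lA lB wA wB r chT] unfolding t_def by blast
  have c1: "\<forall>G. stable_graph g A G \<longrightarrow> stable_graph g B (relabel t G) \<and> nedges (relabel t G) = nedges G"
    using stab by simp
  have lS: "\<forall>x. f x \<noteq> 0 \<longrightarrow> length (leg x) = n" if "f \<in> free_space g A" for f
    using that lA unfolding free_space_def stable_graph_def by auto
  have c2: "\<forall>f\<in>free_space g A. f \<in> rel_space g A \<longrightarrow> push (relabel t) f \<in> rel_space g B"
  proof (intro ballI impI)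
    fix f assume f: "f \<in> free_space g A" and fr: "f \<in> rel_space g A"
    have "push (relabel t) f = (\<lambda>y. if length (leg y) = n then f (relabel r y) else 0)"
      using push_char[OF t r tr rt lS[OF f]] by (rule ext)
    then show "push (relabel t) f \<in> rel_space g B" using fwd_rel[OF t r tr rt lA stab fr] by simp
  qed
  have c3: "\<forall>f\<in>free_space g A. (\<lambda>y. push (relabel t) (diff f) y - diff (push (relabel t) f) y) \<in> rel_space g B"
  proof (intro ballI)
    fix f assume f: "f \<in> free_space g A"
    have "(\<lambda>y. push (relabel t) (diff f) y - diff (push (relabel t) f) y) = (\<lambda>_. 0)"
      using diff_push[OF t r tr rt f lA] by simp
    then show "(\<lambda>y. push (relabel t) (diff f) y - diff (push (relabel t) f) y) \<in> rel_space g B"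
      using rel_space.zero by simp
  qed
  have c4: "\<forall>f\<in>free_space g A. push (relabel t) f \<in> rel_space g B \<longrightarrow> f \<in> rel_space g A"
  proof (intro ballI impI)
    fix f assume f: "f \<in> free_space g A" and F: "push (relabel t) f \<in> rel_space g B"
    have hr: "\<And>x. length (leg x) = n \<Longrightarrow> relabel r (relabel t x) = x" using relabel_inv[OF t r tr] .
    have "(\<lambda>z. if length (leg z) = n \<and> stable_graph g A z then push (relabel t) f (relabel t z) else 0) = f"
    proof
      fix z
      show "(if length (leg z) = n \<and> stable_graph g A z then push (relabel t) f (relabel t z) else 0) = f z"
      proof (cases "length (leg z) = n \<and> stable_graph g A z")
        case True
        then show ?thesis using push_char[OF t r tr rt lS[OF f], of "relabel t z"] hr[of z] by simp
      next
        case False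
        then have "f z = 0" using f lA unfolding free_space_def stable_graph_def by auto
        then show ?thesis by (subst if_not_P[OF False]) simp
      qed
    qed
    then show "f \<in> rel_space g A" using bwd_rel[OF t r tr rt lA F] by simp
  qed
  show ?thesis unfolding injective_chain_map_def using t c1 c2 c3 c4 by blast
qed

theorem mainTheorem8:
  fixes g N :: nat and A :: "rat list" and As :: "nat \<Rightarrow> rat list"
  assumes "1 \<le> length A"
    and "weight_datum g A"
    and "1 \<le> N" and "As N = A"
    and "\<forall>p\<in>{1..N}. length (As p) = length A \<and> in_chamber g (As p)"
    and "\<forall>p\<in>{2..N}. orbit_le g (As (p - 1)) (As p)"
  shows "\<forall>p\<in>{2..N}. \<exists>\<tau>. \<tau> permutes {..<length A} \<and>
           injective_chain_map g (As (p - 1)) (As p) (relabel \<tau>)"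
proof
  fix p assume p: "p \<in> {2..N}"
  then have p1: "p - 1 \<in> {1..N}" and p2: "p \<in> {1..N}" by auto
  show "\<exists>\<tau>. \<tau> permutes {..<length A} \<and> injective_chain_map g (As (p - 1)) (As p) (relabel \<tau>)"
    apply (rule step_map)
    using assms(5) assms(6) p p1 p2 unfolding in_chamber_def by auto
qed

end
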